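(* Let $D\ge 1$. The underlying block design $\mathcal{F}$ of any $(T,N,D)$-tropical code is $(D-1)$-uniquely-disjunct.
   Context: Tropical arithmetic on $\mathbb{R}\cup\{\infty\}$: $x\oplus y=\min(x,y)$, $x\odot y=x+y$, with $x\oplus\infty=x$ and $x\odot\infty=\infty$. For a matrix $S$ with $T$ rows and $N$ columns and a column vector $\mathbf{x}$ of length $N$, $S\odot\mathbf{x}$ is the vector whose $t$-th entry is $\min_{j}(S_{tj}+x_j)$. A $(T,N,D)$-tropical code is a matrix $S\in(\{0\}\cup\mathbb{N}\cup\{\infty\})^{T\times N}$ such that for any two distinct vectors $\mathbf{x},\mathbf{y}\in(\{0\}\cup\mathbb{N}\cup\{\infty\})^{N}$, each having at most $D$ finite entries, $S\odot\mathbf{x}\ne S\odot\mathbf{y}$. The underlying block design of $S$ is the multiset $\mathcal{F}=\{\{t\in[T]: S_{tj}<\infty\}: j\in[N]\}$ (one block per column, so $|\mathcal{F}|=N$); "distinct blocks" means blocks coming from distinct columns (they may coincide as sets). $\mathcal{F}$ is $m$-disjunct if $|Z\setminus(B_1\cup\dots\cup B_m)|\ge 1$ for all distinct blocks $Z,B_1,\dots,B_m\in\mathcal{F}$. $\mathcal{F}$ is $m$-uniquely-disjunct if it is $m$-disjunct and, for every $t\in[T]$ and all distinct blocks $B_1,\dots,B_m\in\mathcal{F}$, at most one block $Z\in\mathcal{F}$ (other than the $B_i$, counted by column) satisfies $Z\setminus(B_1\cup\dots\cup B_m)=\{t\}$. *)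

theory Defs
  imports Main "HOL-Library.Extended_Nat"
begin

text \<open>Entries in {0} \<union> \<nat> \<union> {\<infinity>} are modelled by enat.
A T x N matrix is a function S :: nat \<Rightarrow> nat \<Rightarrow> enat, only entries t < T, j < N matter;
a vector of length N is x :: nat \<Rightarrow> enat, only entries j < N matter.\<close>

definition trop_mv :: "(nat \<Rightarrow> nat \<Rightarrow> enat) \<Rightarrow> nat \<Rightarrow> (nat \<Rightarrow> enat) \<Rightarrow> nat \<Rightarrow> enat" where
  "trop_mv S N x t = (INF j\<in>{..<N}. S t j + x j)"

definition num_finite :: "nat \<Rightarrow> (nat \<Rightarrow> enat) \<Rightarrow> nat" where
  "num_finite N x = card {j. j < N \<and> x j \<noteq> \<infinity>}"

definition tropical_code :: "nat \<Rightarrow> nat \<Rightarrow> nat \<Rightarrow> (nat \<Rightarrow> nat \<Rightarrow> enat) \<Rightarrow> bool" where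
  "tropical_code T N D S \<longleftrightarrow>
     (\<forall>x y. num_finite N x \<le> D \<longrightarrow> num_finite N y \<le> D \<longrightarrow> (\<exists>j<N. x j \<noteq> y j) \<longrightarrow>
        (\<exists>t<T. trop_mv S N x t \<noteq> trop_mv S N y t))"

definition block :: "nat \<Rightarrow> (nat \<Rightarrow> nat \<Rightarrow> enat) \<Rightarrow> nat \<Rightarrow> nat set" where
  "block T S j = {t. t < T \<and> S t j < \<infinity>}"

text \<open>Distinct blocks Z, B_1..B_m are given by a column z and a set I of m columns not containing z.\<close>
definition disjunct :: "nat \<Rightarrow> nat \<Rightarrow> (nat \<Rightarrow> nat \<Rightarrow> enat) \<Rightarrow> nat \<Rightarrow> bool" where
  "disjunct T N S m \<longleftrightarrow>
     (\<forall>I z. I \<subseteq> {..<N} \<longrightarrow> card I = m \<longrightarrow> z < N \<longrightarrow> z \<notin> I \<longrightarrow>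
        card (block T S z - (\<Union>i\<in>I. block T S i)) \<ge> 1)"

definition uniquely_disjunct :: "nat \<Rightarrow> nat \<Rightarrow> (nat \<Rightarrow> nat \<Rightarrow> enat) \<Rightarrow> nat \<Rightarrow> bool" where
  "uniquely_disjunct T N S m \<longleftrightarrow> disjunct T N S m \<and>
     (\<forall>t<T. \<forall>I. I \<subseteq> {..<N} \<longrightarrow> card I = m \<longrightarrow>
        (\<forall>z1 z2. z1 < N \<longrightarrow> z2 < N \<longrightarrow> z1 \<notin> I \<longrightarrow> z2 \<notin> I \<longrightarrow>
           block T S z1 - (\<Union>i\<in>I. block T S i) = {t} \<longrightarrow>
           block T S z2 - (\<Union>i\<in>I. block T S i) = {t} \<longrightarrow> z1 = z2))"

end

theory Submission
  imports Defs
begin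

definition cv :: "enat \<Rightarrow> nat" where "cv e = (case e of enat n \<Rightarrow> n | \<infinity> \<Rightarrow> 0)"

lemma bound_le:
  fixes S :: "nat \<Rightarrow> nat \<Rightarrow> enat" and T :: nat
  assumes "finite I" "i \<in> I" "t < T" "S t i \<noteq> \<infinity>"
  shows "S t i \<le> enat (\<Sum>t'<T. \<Sum>i'\<in>I. cv (S t' i'))"
proof -
  obtain n where n: "S t i = enat n" using assms(4) by (cases "S t i") auto
  have "n = cv (S t i)" using n by (simp add: cv_def)
  also have "\<dots> \<le> (\<Sum>i'\<in>I. cv (S t i'))" using assms by (intro member_le_sum) auto
  also have "\<dots> \<le> (\<Sum>t'<T. \<Sum>i'\<in>I. cv (S t' i'))"
    by (rule member_le_sum[where f="\<lambda>t'. \<Sum>i'\<in>I. cv (S t' i')"]) (use assms in auto)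
  finally show ?thesis using n by simp
qed

lemma INF_if_top:
  assumes "I \<subseteq> A"
  shows "(INF j\<in>A. (if j \<in> I then g j else (\<infinity>::enat))) = (INF j\<in>I. g j)"
proof (rule antisym)
  show "(INF j\<in>A. (if j \<in> I then g j else (\<infinity>::enat))) \<le> (INF j\<in>I. g j)"
  proof (rule INF_greatest)
    fix i assume i: "i \<in> I"
    hence iA: "i \<in> A" using assms by blast
    show "(INF j\<in>A. (if j \<in> I then g j else (\<infinity>::enat))) \<le> g i"
      by (rule INF_lower2[OF iA]) (simp add: i)
  qed
  show "(INF j\<in>I. g j) \<le> (INF j\<in>A. (if j \<in> I then g j else (\<infinity>::enat)))"
  proof (rule INF_greatest)
    fix j assume "j \<in> A"
    show "(INF j\<in>I. g j) \<le> (if j \<in> I then g j else (\<infinity>::enat))"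
      by (cases "j \<in> I") (simp_all add: INF_lower)
  qed
qed

lemma mv_formula:
  assumes "I \<subseteq> {..<N}" "z < N" "z \<notin> I"
  shows "trop_mv S N ((\<lambda>j. if j \<in> I then 0 else \<infinity>)(z := v)) t
      = min (INF i\<in>I. S t i) (S t z + v)"
proof -
  let ?f = "\<lambda>j. S t j + ((\<lambda>j. if j \<in> I then 0 else \<infinity>)(z := v)) j"
  have e: "{..<N} = insert z ({..<N} - {z})" using assms by auto
  have "trop_mv S N ((\<lambda>j. if j \<in> I then 0 else \<infinity>)(z := v)) t = inf (?f z) (INF j\<in>{..<N} - {z}. ?f j)"
    unfolding trop_mv_def by (subst e) (simp only: INF_insert)
  also have "(INF j\<in>{..<N} - {z}. ?f j) = (INF j\<in>{..<N} - {z}. (if j \<in> I then S t j else \<infinity>))"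
    by (rule INF_cong) auto
  also have "\<dots> = (INF i\<in>I. S t i)" using assms by (intro INF_if_top) auto
  also have "S t z + ((\<lambda>j. if j \<in> I then 0 else \<infinity>)(z := v)) z = S t z + v" by simp
  finally show ?thesis by (metis inf_min inf_commute)
qed

lemma nf_formula:
  assumes "I \<subseteq> {..<N}" "z < N" "z \<notin> I"
  shows "num_finite N ((\<lambda>j. if j \<in> I then 0 else \<infinity>)(z := v)) = (if v = \<infinity> then card I else card I + 1)"
proof -
  have fin: "finite I" using assms(1) finite_subset by blast
  show ?thesis
  proof (cases "v = \<infinity>")
    case True
    have "{j. j < N \<and> ((\<lambda>j. if j \<in> I then 0 else \<infinity>)(z := v)) j \<noteq> \<infinity>} = I"
      using assms True by (auto simp: zero_enat_def)
    then show ?thesis using True by (simp add: num_finite_def)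
  next
    case False
    have "{j. j < N \<and> ((\<lambda>j. if j \<in> I then 0 else \<infinity>)(z := v)) j \<noteq> \<infinity>} = insert z I"
      using assms False by (auto simp: zero_enat_def)
    then show ?thesis using False fin assms by (simp add: num_finite_def)
  qed
qed

theorem mainTheorem10:
  fixes T N D :: nat and S :: "nat \<Rightarrow> nat \<Rightarrow> enat"
  assumes "D \<ge> 1" and "tropical_code T N D S"
  shows "uniquely_disjunct T N S (D - 1)"
proof -
  have code: "\<And>x y. num_finite N x \<le> D \<Longrightarrow> num_finite N y \<le> D \<Longrightarrow> (\<exists>j<N. x j \<noteq> y j) \<Longrightarrow>
        (\<exists>t<T. trop_mv S N x t \<noteq> trop_mv S N y t)"
    using assms(2) unfolding tropical_code_def by blast
  have disj: "disjunct T N S (D - 1)"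
    unfolding disjunct_def
  proof (intro allI impI)
    fix I z assume I: "I \<subseteq> {..<N}" "card I = D - 1" "z < N" "z \<notin> I"
    have fin: "finite I" using I(1) finite_subset by blast
    define M where "M = (\<Sum>t'<T. \<Sum>i'\<in>I. cv (S t' i'))"
    define x0 where "x0 = (\<lambda>j. if j \<in> I then 0 else (\<infinity>::enat))"
    show "1 \<le> card (block T S z - (\<Union>i\<in>I. block T S i))"
    proof (rule ccontr)
      assume "\<not> ?thesis"
      hence "card (block T S z - (\<Union>i\<in>I. block T S i)) = 0" by simp
      moreover have "finite (block T S z)" unfolding block_def by simp
      ultimately have sub: "block T S z \<subseteq> (\<Union>i\<in>I. block T S i)" by auto
      let ?x = "x0(z := \<infinity>)" let ?y = "x0(z := enat M)"
      have "num_finite N ?x \<le> D" "num_finite N ?y \<le> D"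
        using nf_formula[OF I(1,3,4), where v="\<infinity>"] nf_formula[OF I(1,3,4), where v="enat M"] I(2) assms(1)
        unfolding x0_def by simp_all
      moreover have "\<exists>j<N. ?x j \<noteq> ?y j" using I(3) by (intro exI[of _ z]) auto
      ultimately obtain t where t: "t < T" "trop_mv S N ?x t \<noteq> trop_mv S N ?y t"
        using code by blast
      have le: "(INF i\<in>I. S t i) \<le> S t z + enat M"
      proof (cases "S t z = \<infinity>")
        case True then show ?thesis by simp
      next
        case False
        hence "t \<in> block T S z" using t(1) unfolding block_def by auto
        then obtain i where i: "i \<in> I" "S t i < \<infinity>" using sub unfolding block_def by blast
        have "(INF i\<in>I. S t i) \<le> S t i" using i by (intro INF_lower)
        also have "\<dots> \<le> enat M" unfolding M_def using bound_le[OF fin i(1) t(1)] i by auto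
        also have "\<dots> \<le> S t z + enat M" by simp
        finally show ?thesis .
      qed
      have e1: "trop_mv S N ?x t = min (INF i\<in>I. S t i) (S t z + \<infinity>)"
        unfolding x0_def by (rule mv_formula[OF I(1,3,4)])
      have e2: "trop_mv S N ?y t = min (INF i\<in>I. S t i) (S t z + enat M)"
        unfolding x0_def by (rule mv_formula[OF I(1,3,4)])
      have "trop_mv S N ?x t = trop_mv S N ?y t"
        unfolding e1 e2 using le by (simp only: min_absorb1 plus_enat_simps(3) enat_ord_simps(3))
      with t show False by simp
    qed
  qed
  show ?thesis
    unfolding uniquely_disjunct_def
  proof (intro conjI disj allI impI)
    fix t I z1 z2
    assume t: "t < T" and I: "I \<subseteq> {..<N}" "card I = D - 1"
      and z: "z1 < N" "z2 < N" "z1 \<notin> I" "z2 \<notin> I"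
      and b1: "block T S z1 - (\<Union>i\<in>I. block T S i) = {t}"
      and b2: "block T S z2 - (\<Union>i\<in>I. block T S i) = {t}"
    show "z1 = z2"
    proof (rule ccontr)
      assume ne: "z1 \<noteq> z2"
      have fin: "finite I" using I(1) finite_subset by blast
      define M where "M = (\<Sum>t'<T. \<Sum>i'\<in>I. cv (S t' i'))"
      define x0 where "x0 = (\<lambda>j. if j \<in> I then 0 else (\<infinity>::enat))"
      have tz1: "S t z1 \<noteq> \<infinity>" using b1 unfolding block_def by auto
      have tz2: "S t z2 \<noteq> \<infinity>" using b2 unfolding block_def by auto
      have tI: "S t i = \<infinity>" if i: "i \<in> I" for i
      proof -
        have "t \<notin> block T S i" using b1 i by blast
        then show ?thesis using t unfolding block_def by auto
      qed
      let ?x = "x0(z1 := enat M + S t z2)" let ?y = "x0(z2 := enat M + S t z1)"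
      have "num_finite N ?x \<le> D" "num_finite N ?y \<le> D"
        using nf_formula[OF I(1) z(1,3), where v="enat M + S t z2"] nf_formula[OF I(1) z(2,4), where v="enat M + S t z1"] I(2) assms(1) tz1 tz2
        unfolding x0_def by simp_all
      moreover have "\<exists>j<N. ?x j \<noteq> ?y j" using z ne tz2 unfolding x0_def
        by (intro exI[of _ z1]) auto
      ultimately obtain t' where t': "t' < T" "trop_mv S N ?x t' \<noteq> trop_mv S N ?y t'"
        using code by blast
      have gen: "(INF i\<in>I. S t' i) \<le> S t' zz + (enat M + c)"
        if zz: "block T S zz - (\<Union>i\<in>I. block T S i) = {t}" and tt: "t' \<noteq> t" for zz c
      proof (cases "S t' zz = \<infinity>")
        case True then show ?thesis by simp
      next
        case False
        hence "t' \<in> block T S zz" using t'(1) unfolding block_def by auto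
        hence "t' \<in> (\<Union>i\<in>I. block T S i)" using zz tt by blast
        then obtain i where i: "i \<in> I" "S t' i < \<infinity>" unfolding block_def by blast
        have "(INF i\<in>I. S t' i) \<le> S t' i" using i by (intro INF_lower)
        also have "\<dots> \<le> enat M" unfolding M_def using bound_le[OF fin i(1) t'(1)] i by auto
        also have "\<dots> \<le> S t' zz + (enat M + c)" by (simp add: add.assoc)
        finally show ?thesis .
      qed
      have e1: "trop_mv S N ?x t' = min (INF i\<in>I. S t' i) (S t' z1 + (enat M + S t z2))"
        unfolding x0_def by (rule mv_formula[OF I(1) z(1,3)])
      have e2: "trop_mv S N ?y t' = min (INF i\<in>I. S t' i) (S t' z2 + (enat M + S t z1))"
        unfolding x0_def by (rule mv_formula[OF I(1) z(2,4)])
      have "trop_mv S N ?x t' = trop_mv S N ?y t'"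
      proof (cases "t' = t")
        case True
        have "\<infinity> \<le> (INF i\<in>I. S t i)" by (rule INF_greatest) (simp add: tI)
        hence inf: "(INF i\<in>I. S t i) = \<infinity>" by (simp add: top_enat_def[symmetric] top_unique)
        have c: "S t z1 + (enat M + S t z2) = S t z2 + (enat M + S t z1)"
          by (metis add.assoc add.commute)
        show ?thesis by (subst e1, subst e2, unfold True inf c) (rule refl)
      next
        case False
        show ?thesis unfolding e1 e2
          using gen[OF b1 False] gen[OF b2 False] by (simp only: min_absorb1)
      qed
      with t' show False by simp
    qed
  qed
qed

end
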